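(* Consider the discrete-time logical system $x(k+1)=f(x(k),u(k))$ with $f:\mathbb{B}^{n_x}\times\mathbb{B}^{n_u}\to\mathbb{B}^{n_x}$, where $f$ is given by an expression whose leaves are $Px$, $Qu$ (for fixed selection matrices $P,Q$ with $0/1$ entries, products over $\mathrm{GF}(2)$) or constant binary vectors, and whose internal nodes are componentwise XOR, XNOR, NOT, AND, NAND, OR or NOR between subexpressions of equal dimension. Let $\hat{\mathcal{R}}_0$ be a logical zonotope with $\mathcal{X}_0\subseteq\hat{\mathcal{R}}_0$, and let $\mathcal{U}_k\subseteq\mathbb{B}^{n_u}$ be logical zonotopes for $k\ge0$. Define $\hat{\mathcal{R}}_{k+1}=f(\hat{\mathcal{R}}_k,\mathcal{U}_k)$, where the expression of $f$ is evaluated on logical zonotopes by replacing each leaf $Px$ by $\langle Pc,PG\rangle$ for $\hat{\mathcal{R}}_k=\langle c,G\rangle$ (similarly $Qu$ using $\mathcal{U}_k$), each constant $v$ by $\langle v,[\,]\rangle$, and each operation by its logical-zonotope counterpart: XOR by $\langle c_1\oplus c_2,[G_1,G_2]\rangle$; NOT by $\langle c\oplus\mathbf{1},G\rangle$; XNOR by NOT of XOR; AND by $\langle c_\wedge,G_\wedge\rangle$ with $c_\wedge=c_1c_2$, $G_\wedge=[c_1g_{2,1},\dots,c_1g_{2,\gamma_2},c_2g_{1,1},\dots,c_2g_{1,\gamma_1},g_{1,1}g_{2,1},\dots,g_{1,\gamma_1}g_{2,\gamma_2}]$; NAND by NOT of AND; OR of $\mathcal{L}_1,\mathcal{L}_2$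 by NAND of $\neg\mathcal{L}_1,\neg\mathcal{L}_2$; NOR by NOT of OR. Then for every $N\ge0$, $\hat{\mathcal{R}}_N\supseteq\mathcal{R}_N$, the exact reachable set.
   Context: $\mathbb{B}=\{0,1\}$; $\mathbf{1}$ is the all-ones vector; for binary vectors $\oplus$ is componentwise XOR, $\neg$ negation, $\vee$ OR and juxtaposition $ab$ componentwise AND; for $g\in\mathbb{B}^n$, $\beta\in\mathbb{B}$, $g\beta$ is $g$ if $\beta=1$ and $0$ otherwise. A logical zonotope is $\langle c,G\rangle=\{x\in\mathbb{B}^n: x=c\oplus g_1\beta_1\oplus\cdots\oplus g_\gamma\beta_\gamma,\ \beta_i\in\{0,1\}\}$ for $c\in\mathbb{B}^n$, $G=[g_1,\dots,g_\gamma]\in\mathbb{B}^{n\times\gamma}$; in the operations above $\mathcal{L}_i=\langle c_i,G_i\rangle$ with $G_i=[g_{i,1},\dots,g_{i,\gamma_i}]$. The exact reachable set after $N$ steps from initial set $\mathcal{X}_0\subseteq\mathbb{B}^{n_x}$ with inputs $u(k)\in\mathcal{U}_k$ is $\mathcal{R}_N=\{x(N): x(0)\in\mathcal{X}_0,\ u(k)\in\mathcal{U}_k,\ x(k+1)=f(x(k),u(k))\ \forall k\in\{0,\dots,N-1\}\}$, with $\mathcal{R}_0=\mathcal{X}_0$. *)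

theory Defs
  imports Main
begin

text \<open>Binary vectors in B^n are boolean lists of length n; a 0/1 matrix is a list of
rows (each a boolean list). Products are over GF(2).\<close>

type_synonym bvec = "bool list"
type_synonym bmat = "bool list list"

definition vxor :: "bvec \<Rightarrow> bvec \<Rightarrow> bvec" where
  "vxor a b = map2 (\<noteq>) a b"

definition vand :: "bvec \<Rightarrow> bvec \<Rightarrow> bvec" where
  "vand a b = map2 (\<and>) a b"

definition vor :: "bvec \<Rightarrow> bvec \<Rightarrow> bvec" where
  "vor a b = map2 (\<or>) a b"

definition vnot :: "bvec \<Rightarrow> bvec" where
  "vnot a = map Not a"

definition ones :: "nat \<Rightarrow> bvec" where
  "ones n = replicate n True"

definition mat_vec :: "bmat \<Rightarrow> bvec \<Rightarrow> bvec" where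
  "mat_vec P x = map (\<lambda>row. foldl (\<noteq>) False (map2 (\<and>) row x)) P"

definition is_bmat :: "nat \<Rightarrow> bmat \<Rightarrow> bool" where
  "is_bmat ncols P \<longleftrightarrow> (\<forall>row\<in>set P. length row = ncols)"

type_synonym lzono = "bvec \<times> bvec list"

definition lz_set :: "lzono \<Rightarrow> bvec set" where
  "lz_set Z = (case Z of (c, G) \<Rightarrow>
     {foldl (\<lambda>acc (g, b). if b then vxor acc g else acc) c (zip G \<beta>) | \<beta>.
        length \<beta> = length G})"

definition wf_lz :: "nat \<Rightarrow> lzono \<Rightarrow> bool" where
  "wf_lz n Z \<longleftrightarrow> length (fst Z) = n \<and> (\<forall>g\<in>set (snd Z). length g = n)"

datatype bexpr =
    LeafX bmat
  | LeafU bmat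
  | Const bvec
  | XOR bexpr bexpr
  | XNOR bexpr bexpr
  | NOT bexpr
  | AND bexpr bexpr
  | NAND bexpr bexpr
  | OR bexpr bexpr
  | NOR bexpr bexpr

fun wf_expr :: "nat \<Rightarrow> nat \<Rightarrow> bexpr \<Rightarrow> nat \<Rightarrow> bool" where
  "wf_expr nx nu (LeafX P) n \<longleftrightarrow> is_bmat nx P \<and> length P = n"
| "wf_expr nx nu (LeafU Q) n \<longleftrightarrow> is_bmat nu Q \<and> length Q = n"
| "wf_expr nx nu (Const v) n \<longleftrightarrow> length v = n"
| "wf_expr nx nu (XOR a b) n \<longleftrightarrow> wf_expr nx nu a n \<and> wf_expr nx nu b n"
| "wf_expr nx nu (XNOR a b) n \<longleftrightarrow> wf_expr nx nu a n \<and> wf_expr nx nu b n"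
| "wf_expr nx nu (NOT a) n \<longleftrightarrow> wf_expr nx nu a n"
| "wf_expr nx nu (AND a b) n \<longleftrightarrow> wf_expr nx nu a n \<and> wf_expr nx nu b n"
| "wf_expr nx nu (NAND a b) n \<longleftrightarrow> wf_expr nx nu a n \<and> wf_expr nx nu b n"
| "wf_expr nx nu (OR a b) n \<longleftrightarrow> wf_expr nx nu a n \<and> wf_expr nx nu b n"
| "wf_expr nx nu (NOR a b) n \<longleftrightarrow> wf_expr nx nu a n \<and> wf_expr nx nu b n"

fun eval :: "bexpr \<Rightarrow> bvec \<Rightarrow> bvec \<Rightarrow> bvec" where
  "eval (LeafX P) x u = mat_vec P x"
| "eval (LeafU Q) x u = mat_vec Q u"
| "eval (Const v) x u = v"
| "eval (XOR a b) x u = vxor (eval a x u) (eval b x u)"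
| "eval (XNOR a b) x u = vnot (vxor (eval a x u) (eval b x u))"
| "eval (NOT a) x u = vnot (eval a x u)"
| "eval (AND a b) x u = vand (eval a x u) (eval b x u)"
| "eval (NAND a b) x u = vnot (vand (eval a x u) (eval b x u))"
| "eval (OR a b) x u = vor (eval a x u) (eval b x u)"
| "eval (NOR a b) x u = vnot (vor (eval a x u) (eval b x u))"

definition lz_xor :: "lzono \<Rightarrow> lzono \<Rightarrow> lzono" where
  "lz_xor L1 L2 = (vxor (fst L1) (fst L2), snd L1 @ snd L2)"

definition lz_not :: "lzono \<Rightarrow> lzono" where
  "lz_not L = (vxor (fst L) (ones (length (fst L))), snd L)"

definition lz_and :: "lzono \<Rightarrow> lzono \<Rightarrow> lzono" where
  "lz_and L1 L2 = (case L1 of (c1, G1) \<Rightarrow> case L2 of (c2, G2) \<Rightarrow>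
     (vand c1 c2,
      map (vand c1) G2 @ map (vand c2) G1 @ [vand g1 g2. g1 \<leftarrow> G1, g2 \<leftarrow> G2]))"

definition lz_xnor :: "lzono \<Rightarrow> lzono \<Rightarrow> lzono" where
  "lz_xnor L1 L2 = lz_not (lz_xor L1 L2)"

definition lz_nand :: "lzono \<Rightarrow> lzono \<Rightarrow> lzono" where
  "lz_nand L1 L2 = lz_not (lz_and L1 L2)"

definition lz_or :: "lzono \<Rightarrow> lzono \<Rightarrow> lzono" where
  "lz_or L1 L2 = lz_nand (lz_not L1) (lz_not L2)"

definition lz_nor :: "lzono \<Rightarrow> lzono \<Rightarrow> lzono" where
  "lz_nor L1 L2 = lz_not (lz_or L1 L2)"

definition lz_matmul :: "bmat \<Rightarrow> lzono \<Rightarrow> lzono" where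
  "lz_matmul P L = (mat_vec P (fst L), map (mat_vec P) (snd L))"

fun zeval :: "bexpr \<Rightarrow> lzono \<Rightarrow> lzono \<Rightarrow> lzono" where
  "zeval (LeafX P) X U = lz_matmul P X"
| "zeval (LeafU Q) X U = lz_matmul Q U"
| "zeval (Const v) X U = (v, [])"
| "zeval (XOR a b) X U = lz_xor (zeval a X U) (zeval b X U)"
| "zeval (XNOR a b) X U = lz_xnor (zeval a X U) (zeval b X U)"
| "zeval (NOT a) X U = lz_not (zeval a X U)"
| "zeval (AND a b) X U = lz_and (zeval a X U) (zeval b X U)"
| "zeval (NAND a b) X U = lz_nand (zeval a X U) (zeval b X U)"
| "zeval (OR a b) X U = lz_or (zeval a X U) (zeval b X U)"
| "zeval (NOR a b) X U = lz_nor (zeval a X U) (zeval b X U)"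

fun reach_hat :: "bexpr \<Rightarrow> lzono \<Rightarrow> (nat \<Rightarrow> lzono) \<Rightarrow> nat \<Rightarrow> lzono" where
  "reach_hat f R0 U 0 = R0"
| "reach_hat f R0 U (Suc k) = zeval f (reach_hat f R0 U k) (U k)"

definition reach_exact :: "bexpr \<Rightarrow> bvec set \<Rightarrow> (nat \<Rightarrow> bvec set) \<Rightarrow> nat \<Rightarrow> bvec set" where
  "reach_exact f X0 Us N =
     {x N | x u. x 0 \<in> X0 \<and> (\<forall>k<N. u k \<in> Us k \<and> x (Suc k) = eval f (x k) (u k))}"

end

theory Submission
  imports Defs
begin

fun sumb :: "bool list \<Rightarrow> bool" where
  "sumb [] = False"
| "sumb (a # xs) = (a \<noteq> sumb xs)"

lemma sumb_append[simp]: "sumb (xs @ ys) = (sumb xs \<noteq> sumb ys)"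
  by (induction xs) auto

definition FF :: "bvec \<Rightarrow> (bvec \<times> bool) list \<Rightarrow> bvec" where
  "FF c T = foldl (\<lambda>acc (g, b). if b then vxor acc g else acc) c T"

lemma FF_Cons[simp]: "FF c ((g,b) # T) = FF (if b then vxor c g else c) T"
  by (simp add: FF_def)
lemma FF_Nil[simp]: "FF c [] = c"
  by (simp add: FF_def)

lemma lz_set_FF: "lz_set Z = {FF (fst Z) (zip (snd Z) \<beta>) | \<beta>. length \<beta> = length (snd Z)}"
  by (cases Z) (simp add: lz_set_def FF_def)

lemma FF_len: "\<forall>(g,b)\<in>set T. length g = length c \<Longrightarrow> length (FF c T) = length c"
  by (induction T arbitrary: c) (auto simp: vxor_def)

lemma FF_nth: "\<forall>(g,b)\<in>set T. length g = length c \<Longrightarrow> i < length c \<Longrightarrow>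
   FF c T ! i = (c!i \<noteq> sumb (map (\<lambda>(g,b). b \<and> g!i) T))"
proof (induction T arbitrary: c)
  case Nil then show ?case by simp
next
  case (Cons a T)
  obtain g b where a: "a = (g,b)" by force
  define c' where "c' = (if b then vxor c g else c)"
  have lg: "length g = length c" using Cons.prems a by auto
  have lc: "length c' = length c" using lg by (simp add: c'_def vxor_def)
  have ci: "c' ! i = (c!i \<noteq> (b \<and> g!i))" using lg Cons.prems by (simp add: c'_def vxor_def)
  have "FF c' T ! i = (c'!i \<noteq> sumb (map (\<lambda>(g,b). b \<and> g!i) T))"
    using Cons.IH[of c'] Cons.prems lc by auto
  then show ?case using a ci by (auto simp: c'_def)
qed

definition cm :: "nat \<Rightarrow> bvec \<Rightarrow> lzono \<Rightarrow> bool" where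
  "cm n x Z \<longleftrightarrow> wf_lz n Z \<and> length x = n \<and>
     (\<exists>T. map fst T = snd Z \<and> (\<forall>i<n. x!i = (fst Z!i \<noteq> sumb (map (\<lambda>(g,b). b \<and> g!i) T))))"

lemma cm_iff: assumes "wf_lz n Z" shows "x \<in> lz_set Z \<longleftrightarrow> cm n x Z"
proof
  assume "x \<in> lz_set Z"
  then obtain \<beta> where b: "length \<beta> = length (snd Z)" and x: "x = FF (fst Z) (zip (snd Z) \<beta>)"
    unfolding lz_set_FF by auto
  have L: "\<forall>(g,b)\<in>set (zip (snd Z) \<beta>). length g = length (fst Z)"
    using assms by (auto simp: wf_lz_def dest: set_zip_leftD)
  show "cm n x Z" unfolding cm_def
    using assms b x FF_len[OF L] FF_nth[OF L]
    by (intro conjI exI[of _ "zip (snd Z) \<beta>"]) (auto simp: wf_lz_def)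
next
  assume "cm n x Z"
  then obtain T where T: "map fst T = snd Z" and lx: "length x = n"
     and xi: "\<forall>i<n. x!i = (fst Z!i \<noteq> sumb (map (\<lambda>(g,b). b \<and> g!i) T))"
    unfolding cm_def by auto
  have z: "zip (snd Z) (map snd T) = T" using T zip_map_fst_snd by metis
  have "\<forall>p\<in>set T. fst p \<in> set (snd Z)" using T by (metis image_eqI set_map)
  then have L: "\<forall>(g,b)\<in>set T. length g = length (fst Z)"
    using assms by (auto simp: wf_lz_def)
  have "x = FF (fst Z) T"
    using lx xi assms FF_len[OF L] FF_nth[OF L] by (intro nth_equalityI) (auto simp: wf_lz_def)
  moreover have "length (map snd T) = length (snd Z)" using T by (metis length_map)
  ultimately show "x \<in> lz_set Z" unfolding lz_set_FF using z
    by (intro CollectI exI[of _ "map snd T"]) auto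
qed

lemma cm_len: "cm n x Z \<Longrightarrow> length x = n" by (simp add: cm_def)

lemma cm_not: "cm n x Z \<Longrightarrow> cm n (vnot x) (lz_not Z)"
  unfolding cm_def lz_not_def wf_lz_def vnot_def vxor_def ones_def
  by auto

lemma cm_xor: "cm n x Z1 \<Longrightarrow> cm n y Z2 \<Longrightarrow> cm n (vxor x y) (lz_xor Z1 Z2)"
proof -
  assume a: "cm n x Z1" "cm n y Z2"
  then obtain T1 T2 where T1: "map fst T1 = snd Z1" "\<forall>i<n. x!i = (fst Z1!i \<noteq> sumb (map (\<lambda>(g,b). b \<and> g!i) T1))"
    and T2: "map fst T2 = snd Z2" "\<forall>i<n. y!i = (fst Z2!i \<noteq> sumb (map (\<lambda>(g,b). b \<and> g!i) T2))"
    unfolding cm_def by blast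
  show ?thesis unfolding cm_def
    using a T1 T2
    by (intro conjI exI[of _ "T1 @ T2"]) (auto simp: cm_def lz_xor_def wf_lz_def vxor_def)
qed

lemma sumb_and_left: "sumb (map (\<lambda>x. p \<and> h x) ys) = (p \<and> sumb (map h ys))"
  by (induction ys) auto

lemma sumb_prod: "sumb (concat (map (\<lambda>a. map (\<lambda>b. f a \<and> h b) ys) xs)) = (sumb (map f xs) \<and> sumb (map h ys))"
  by (induction xs) (auto simp: sumb_and_left)

lemma sum_vand: "\<forall>(g,b)\<in>set T. i < length g \<Longrightarrow> i < length c \<Longrightarrow>
  sumb (map (\<lambda>(g,b). b \<and> vand c g ! i) T) = (c!i \<and> sumb (map (\<lambda>(g,b). b \<and> g!i) T))"
  by (induction T) (auto simp: vand_def)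

lemma sum_prodT: "\<forall>(g,b)\<in>set T1. i < length g \<Longrightarrow> \<forall>(g,b)\<in>set T2. i < length g \<Longrightarrow>
  sumb (map (\<lambda>(g,b). b \<and> g ! i) (concat (map (\<lambda>(g1,b1). map (\<lambda>(g2,b2). (vand g1 g2, b1 \<and> b2)) T2) T1)))
   = (sumb (map (\<lambda>(g,b). b \<and> g!i) T1) \<and> sumb (map (\<lambda>(g,b). b \<and> g!i) T2))"
proof (induction T1)
  case Nil then show ?case by simp
next
  case (Cons a T1)
  obtain g1 b1 where a: "a = (g1,b1)" by force
  have "sumb (map (\<lambda>(g,b). b \<and> g ! i) (map (\<lambda>(g2,b2). (vand g1 g2, b1 \<and> b2)) T2))
     = ((b1 \<and> g1!i) \<and> sumb (map (\<lambda>(g,b). b \<and> g!i) T2))"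
    using Cons.prems a by (induction T2) (auto simp: vand_def)
  then show ?case using Cons a by auto
qed

lemma map_vand_eq: "map (\<lambda>(g,b). b \<and> g!i) (map (\<lambda>(g,b). (vand c g, b)) T) = map (\<lambda>(g,b). b \<and> vand c g ! i) T"
  by (induction T) auto

lemma cm_and: "cm n x Z1 \<Longrightarrow> cm n y Z2 \<Longrightarrow> cm n (vand x y) (lz_and Z1 Z2)"
proof -
  assume a: "cm n x Z1" "cm n y Z2"
  obtain c1 G1 c2 G2 where Z: "Z1 = (c1,G1)" "Z2 = (c2,G2)" by force
  obtain T1 T2 where T1: "map fst T1 = G1" "\<forall>i<n. x!i = (c1!i \<noteq> sumb (map (\<lambda>(g,b). b \<and> g!i) T1))"
    and T2: "map fst T2 = G2" "\<forall>i<n. y!i = (c2!i \<noteq> sumb (map (\<lambda>(g,b). b \<and> g!i) T2))"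
    using a Z unfolding cm_def by auto
  have w: "length c1 = n" "length c2 = n" "\<forall>g\<in>set G1. length g = n" "\<forall>g\<in>set G2. length g = n"
    "length x = n" "length y = n"
    using a Z by (auto simp: cm_def wf_lz_def)
  have L1: "\<forall>(g,b)\<in>set T1. length g = n" using w T1 by force
  have L2: "\<forall>(g,b)\<in>set T2. length g = n" using w T2 by force
  define TP where "TP = concat (map (\<lambda>(g1,b1). map (\<lambda>(g2,b2). (vand g1 g2, b1 \<and> b2)) T2) T1)"
  define T where "T = map (\<lambda>(g,b). (vand c1 g, b)) T2 @ map (\<lambda>(g,b). (vand c2 g, b)) T1 @ TP"
  have fT: "map fst T = snd (lz_and Z1 Z2)"
    unfolding T_def TP_def lz_and_def Z using T1(1) T2(1)
    by (auto simp: map_concat case_prod_beta comp_def intro!: arg_cong[where f=concat])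
  have wfa: "wf_lz n (lz_and Z1 Z2)"
    unfolding lz_and_def Z wf_lz_def using w by (auto simp: vand_def)
  have comp: "\<forall>i<n. vand x y ! i = (fst (lz_and Z1 Z2) ! i \<noteq> sumb (map (\<lambda>(g,b). b \<and> g!i) T))"
  proof (intro allI impI)
    fix i assume i: "i < n"
    let ?S1 = "sumb (map (\<lambda>(g,b). b \<and> g!i) T1)"
    let ?S2 = "sumb (map (\<lambda>(g,b). b \<and> g!i) T2)"
    have s1: "sumb (map (\<lambda>(g,b). b \<and> g!i) (map (\<lambda>(g,b). (vand c1 g, b)) T2)) = (c1!i \<and> ?S2)"
    proof -
      have "\<forall>(g,b)\<in>set T2. i < length g" using L2 i by auto
      then show ?thesis unfolding map_vand_eq using sum_vand[of T2 i c1] w i by simp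
    qed
    have s2: "sumb (map (\<lambda>(g,b). b \<and> g!i) (map (\<lambda>(g,b). (vand c2 g, b)) T1)) = (c2!i \<and> ?S1)"
    proof -
      have "\<forall>(g,b)\<in>set T1. i < length g" using L1 i by auto
      then show ?thesis unfolding map_vand_eq using sum_vand[of T1 i c2] w i by simp
    qed
    have s3: "sumb (map (\<lambda>(g,b). b \<and> g!i) TP) = (?S1 \<and> ?S2)"
    proof -
      have "\<forall>(g,b)\<in>set T1. i < length g" "\<forall>(g,b)\<in>set T2. i < length g" using L1 L2 i by auto
      then show ?thesis unfolding TP_def using sum_prodT[of T1 i T2] by simp
    qed
    have e1: "vand x y ! i = (x!i \<and> y!i)" using w i by (simp add: vand_def)
    have e2: "fst (lz_and Z1 Z2) ! i = (c1!i \<and> c2!i)" using w i by (simp add: vand_def lz_and_def Z)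
    have e3: "sumb (map (\<lambda>(g,b). b \<and> g!i) T) = ((c1!i \<and> ?S2) \<noteq> ((c2!i \<and> ?S1) \<noteq> (?S1 \<and> ?S2)))"
      unfolding T_def map_append sumb_append s1 s2 s3 by (rule refl)
    have xi: "x!i = (c1!i \<noteq> ?S1)" using T1(2) i by blast
    have yi: "y!i = (c2!i \<noteq> ?S2)" using T2(2) i by blast
    show "vand x y ! i = (fst (lz_and Z1 Z2) ! i \<noteq> sumb (map (\<lambda>(g,b). b \<and> g!i) T))"
      unfolding e1 e2 e3 xi yi by argo
  qed
  show ?thesis unfolding cm_def using wfa fT comp w by (auto simp: vand_def)
qed

lemma vor_eq: "vor x y = vnot (vand (vnot x) (vnot y))"
  unfolding vor_def vnot_def vand_def
  by (induction x arbitrary: y) (auto simp: zip_Cons1 split: list.splits)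

definition dot :: "bvec \<Rightarrow> bvec \<Rightarrow> bool" where
  "dot r x = foldl (\<noteq>) False (map2 (\<and>) r x)"

lemma foldl_xor: "foldl (\<noteq>) a xs = (a \<noteq> sumb xs)"
  by (induction xs arbitrary: a) auto

lemma dot_xor: "length a = length b \<Longrightarrow> dot r (vxor a b) = (dot r a \<noteq> dot r b)"
  unfolding dot_def vxor_def foldl_xor
proof (induction r arbitrary: a b)
  case Nil then show ?case by simp
next
  case (Cons x r)
  then show ?case by (cases a; cases b) auto
qed

lemma mat_vec_xor: "length a = length b \<Longrightarrow> mat_vec P (vxor a b) = vxor (mat_vec P a) (mat_vec P b)"
  unfolding mat_vec_def
  using dot_xor[unfolded dot_def] by (induction P) (auto simp: vxor_def)

lemma len_mat_vec[simp]: "length (mat_vec P x) = length P"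
  by (simp add: mat_vec_def)

lemma mat_FF: "\<forall>(g,b)\<in>set T. length g = length c \<Longrightarrow>
  mat_vec P (FF c T) = FF (mat_vec P c) (map (\<lambda>(g,b). (mat_vec P g, b)) T)"
proof (induction T arbitrary: c)
  case Nil then show ?case by simp
next
  case (Cons a T)
  obtain g b where a: "a = (g,b)" by force
  have lg: "length g = length c" using Cons.prems a by auto
  have lv: "length (vxor c g) = length c" using lg by (simp add: vxor_def)
  show ?case using Cons lg lv a mat_vec_xor[OF lg[symmetric], of P]
    by (auto simp: mat_vec_xor)
qed

lemma mem_matmul: assumes "wf_lz m Z" "x \<in> lz_set Z"
  shows "mat_vec P x \<in> lz_set (lz_matmul P Z)" "wf_lz (length P) (lz_matmul P Z)"
proof -
  obtain \<beta> where b: "length \<beta> = length (snd Z)" and x: "x = FF (fst Z) (zip (snd Z) \<beta>)"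
    using assms unfolding lz_set_FF by auto
  have L: "\<forall>(g,b)\<in>set (zip (snd Z) \<beta>). length g = length (fst Z)"
    using assms by (auto simp: wf_lz_def dest: set_zip_leftD)
  have "mat_vec P x = FF (mat_vec P (fst Z)) (zip (map (mat_vec P) (snd Z)) \<beta>)"
    using mat_FF[OF L, of P] x by (simp add: zip_map1 case_prod_beta comp_def)
  then show "mat_vec P x \<in> lz_set (lz_matmul P Z)"
    unfolding lz_set_FF lz_matmul_def using b by auto
  show "wf_lz (length P) (lz_matmul P Z)" by (auto simp: wf_lz_def lz_matmul_def)
qed

lemma main: "wf_expr nx nu e n \<Longrightarrow> wf_lz nx X \<Longrightarrow> wf_lz nu U \<Longrightarrow> x \<in> lz_set X \<Longrightarrow> u \<in> lz_set U
  \<Longrightarrow> cm n (eval e x u) (zeval e X U)"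
proof (induction e arbitrary: n)
  case (LeafX P)
  then show ?case using mem_matmul[of nx X x P] cm_iff by auto
next
  case (LeafU Q)
  then show ?case using mem_matmul[of nu U u Q] cm_iff by auto
next
  case (Const v)
  then show ?case unfolding cm_def wf_lz_def by auto
next
  case (XOR a b) then show ?case by (auto intro: cm_xor)
next
  case (XNOR a b) then show ?case by (auto intro: cm_xor cm_not simp: lz_xnor_def)
next
  case (NOT a) then show ?case by (auto intro: cm_not)
next
  case (AND a b) then show ?case by (auto intro: cm_and)
next
  case (NAND a b) then show ?case by (auto intro: cm_and cm_not simp: lz_nand_def)
next
  case (OR a b)
  have "cm n (eval a x u) (zeval a X U)" "cm n (eval b x u) (zeval b X U)" using OR by auto
  then show ?case by (simp add: lz_or_def lz_nand_def vor_eq cm_not cm_and)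
next
  case (NOR a b)
  have "cm n (eval a x u) (zeval a X U)" "cm n (eval b x u) (zeval b X U)" using NOR by auto
  then show ?case by (simp add: lz_nor_def lz_or_def lz_nand_def vor_eq cm_not cm_and)
qed

theorem theorem1:
  fixes nx nu :: nat and f :: bexpr and X0 :: "bvec set"
    and R0 :: lzono and U :: "nat \<Rightarrow> lzono" and N :: nat
  assumes f_wf: "wf_expr nx nu f nx"
    and X0_dim: "\<forall>x\<in>X0. length x = nx"
    and R0_wf: "wf_lz nx R0"
    and X0_sub: "X0 \<subseteq> lz_set R0"
    and U_wf: "\<forall>k. wf_lz nu (U k)"
  shows "reach_exact f X0 (\<lambda>k. lz_set (U k)) N \<subseteq> lz_set (reach_hat f R0 U N)"
proof
  fix y assume "y \<in> reach_exact f X0 (\<lambda>k. lz_set (U k)) N"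
  then obtain x u where y: "y = x N" and x0: "x 0 \<in> X0"
    and st: "\<forall>k<N. u k \<in> lz_set (U k) \<and> x (Suc k) = eval f (x k) (u k)"
    unfolding reach_exact_def by auto
  have "k \<le> N \<Longrightarrow> wf_lz nx (reach_hat f R0 U k) \<and> x k \<in> lz_set (reach_hat f R0 U k)" for k
  proof (induction k)
    case 0 then show ?case using R0_wf X0_sub x0 by auto
  next
    case (Suc k)
    then have ih: "wf_lz nx (reach_hat f R0 U k)" "x k \<in> lz_set (reach_hat f R0 U k)" by auto
    have uk: "u k \<in> lz_set (U k)" "x (Suc k) = eval f (x k) (u k)" using st Suc.prems by auto
    have c: "cm nx (x (Suc k)) (reach_hat f R0 U (Suc k))"
      using main[OF f_wf ih(1) U_wf[rule_format] ih(2) uk(1)] uk(2) by simp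
    then have w: "wf_lz nx (reach_hat f R0 U (Suc k))" by (simp add: cm_def)
    then show ?case using cm_iff[OF w] c by auto
  qed
  then show "y \<in> lz_set (reach_hat f R0 U N)" using y by auto
qed

end
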